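(* The following two group presentations are minimal, in the sense that no relator can be removed without changing the group; equivalently, no relator lies in the normal closure, in the free group on the generators, of the remaining relators: (1) $\langle y_2,y_3 \mid [\,c,\ (y_2^ny_3^m)^{-1}c\,(y_2^ny_3^m)\,],\ n,m\in\mathbb{Z},\ (n,m)>(0,0)\rangle$, where $c=[y_2,y_3]$; (2) $\langle x_1,x_2,x_3 \mid x_1^2,\ x_2^2,\ x_3^2,\ [\,v,\ h_{n,m}^{-1}v\,h_{n,m}\,],\ n,m\in\mathbb{Z},\ (n,m)>(0,0)\rangle$, where $v=[x_2x_1,x_1x_3]$ and $h_{n,m}=(x_2x_1)^n(x_1x_3)^m$.
   Context: Commutators are $[a,b]=aba^{-1}b^{-1}$. The order on pairs is lexicographic: $(n,m)>(0,0)$ means $n>0$, or $n=0$ and $m>0$. (These are presentations of the rotation subgroup and of the triangle group of a generic Euclidean triangle, respectively; the first presents the free metabelian group of rank 2.) *)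

theory Defs
  imports "HOL-Algebra.Algebra"
begin

text \<open>Free groups, built from reduced words.  A letter is a pair (a, b):
  b = False means the generator a, b = True means its inverse.\<close>

type_synonym 'a fword = "('a \<times> bool) list"

fun fw_reduce :: "'a fword \<Rightarrow> 'a fword" where
  "fw_reduce [] = []"
| "fw_reduce (x # xs) =
     (case fw_reduce xs of
        [] \<Rightarrow> [x]
      | y # ys \<Rightarrow> (if fst x = fst y \<and> snd x \<noteq> snd y then ys else x # y # ys))"

definition fw_inv :: "'a fword \<Rightarrow> 'a fword" where
  "fw_inv w = rev (map (\<lambda>(a, b). (a, \<not> b)) w)"

definition free_group :: "'a set \<Rightarrow> 'a fword monoid" where
  "free_group S = \<lparr> carrier = {w. fw_reduce w = w \<and> fst ` set w \<subseteq> S},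
                    monoid.mult = (\<lambda>u v. fw_reduce (u @ v)),
                    one = [] \<rparr>"

definition fgen :: "'a \<Rightarrow> 'a fword" where
  "fgen a = [(a, False)]"

definition commutator :: "('g, 'b) monoid_scheme \<Rightarrow> 'g \<Rightarrow> 'g \<Rightarrow> 'g" where
  "commutator G a b = a \<otimes>\<^bsub>G\<^esub> b \<otimes>\<^bsub>G\<^esub> inv\<^bsub>G\<^esub> a \<otimes>\<^bsub>G\<^esub> inv\<^bsub>G\<^esub> b"

definition normal_closure :: "('g, 'b) monoid_scheme \<Rightarrow> 'g set \<Rightarrow> 'g set" where
  "normal_closure G A =
     generate G (\<Union>g\<in>carrier G. (\<lambda>a. g \<otimes>\<^bsub>G\<^esub> a \<otimes>\<^bsub>G\<^esub> inv\<^bsub>G\<^esub> g) ` A)"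

definition minimal_relators :: "('g, 'b) monoid_scheme \<Rightarrow> 'i set \<Rightarrow> ('i \<Rightarrow> 'g) \<Rightarrow> bool" where
  "minimal_relators G I R \<longleftrightarrow>
     (\<forall>i\<in>I. R i \<notin> normal_closure G (R ` (I - {i})))"

definition pos_pairs :: "(int \<times> int) set" where
  "pos_pairs = {(n, m). n > 0 \<or> (n = 0 \<and> m > 0)}"

definition rel1 :: "int \<times> int \<Rightarrow> nat fword" where
  "rel1 p = (let G = free_group {2, 3}; y2 = fgen 2; y3 = fgen 3;
                 c = commutator G y2 y3;
                 g = y2 [^]\<^bsub>G\<^esub> fst p \<otimes>\<^bsub>G\<^esub> y3 [^]\<^bsub>G\<^esub> snd p
             in commutator G c (inv\<^bsub>G\<^esub> g \<otimes>\<^bsub>G\<^esub> c \<otimes>\<^bsub>G\<^esub> g))"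

definition rel2 :: "nat + (int \<times> int) \<Rightarrow> nat fword" where
  "rel2 i = (let G = free_group {1, 2, 3}; x1 = fgen 1; x2 = fgen 2; x3 = fgen 3;
                 a = x2 \<otimes>\<^bsub>G\<^esub> x1; b = x1 \<otimes>\<^bsub>G\<^esub> x3;
                 v = commutator G a b
             in case i of
                  Inl k \<Rightarrow> fgen k \<otimes>\<^bsub>G\<^esub> fgen k
                | Inr (n, m) \<Rightarrow>
                    (let h = a [^]\<^bsub>G\<^esub> n \<otimes>\<^bsub>G\<^esub> b [^]\<^bsub>G\<^esub> m
                     in commutator G v (inv\<^bsub>G\<^esub> h \<otimes>\<^bsub>G\<^esub> v \<otimes>\<^bsub>G\<^esub> h)))"

definition rel2_index :: "(nat + (int \<times> int)) set" where
  "rel2_index = Inl ` {1, 2, 3} \<union> Inr ` pos_pairs"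

end

theory Submission
  imports Defs
begin


definition inv1 :: "'a \<times> bool \<Rightarrow> 'a \<times> bool" where "inv1 x = (fst x, \<not> snd x)"

fun red :: "'a fword \<Rightarrow> bool" where
  "red [] = True"
| "red [x] = True"
| "red (x # y # ys) = (\<not>(fst x = fst y \<and> snd x \<noteq> snd y) \<and> red (y # ys))"

definition step :: "'a \<times> bool \<Rightarrow> 'a fword \<Rightarrow> 'a fword" where
  "step x r = (case r of [] \<Rightarrow> [x]
      | y # ys \<Rightarrow> (if fst x = fst y \<and> snd x \<noteq> snd y then ys else x # y # ys))"

lemma fw_reduce_Cons: "fw_reduce (x # xs) = step x (fw_reduce xs)"
  by (simp add: step_def)

declare fw_reduce.simps(2)[simp del]

lemma red_tl: "red (x # xs) \<Longrightarrow> red xs"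
  by (cases xs) auto

lemma red_step: "red r \<Longrightarrow> red (step x r)"
  by (cases r) (auto simp: step_def dest: red_tl)

lemma red_fw_reduce: "red (fw_reduce w)"
  by (induction w) (auto simp: fw_reduce_Cons red_step)

lemma fw_reduce_red: "red w \<Longrightarrow> fw_reduce w = w"
proof (induction w)
  case Nil then show ?case by simp
next
  case (Cons x xs)
  then have "fw_reduce xs = xs" using red_tl by blast
  then show ?case using Cons.prems by (cases xs) (auto simp: fw_reduce_Cons step_def)
qed

lemma fw_reduce_idem[simp]: "fw_reduce (fw_reduce w) = fw_reduce w"
  by (simp add: fw_reduce_red red_fw_reduce)

lemma fw_reduce_append: "fw_reduce (u @ v) = foldr step u (fw_reduce v)"
  by (induction u) (auto simp: fw_reduce_Cons)

lemma step_cancel: "red w \<Longrightarrow> step x (step (inv1 x) w) = w"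
proof (cases w)
  case Nil then show ?thesis by (simp add: step_def inv1_def)
next
  case (Cons y ys)
  assume r: "red w"
  show ?thesis
  proof (cases "fst (inv1 x) = fst y \<and> snd (inv1 x) \<noteq> snd y")
    case True
    then have xy: "x = y" by (cases x; cases y) (auto simp: inv1_def)
    show ?thesis using True r Cons xy by (cases ys) (auto simp: step_def inv1_def)
  next
    case False then show ?thesis using Cons by (auto simp: step_def inv1_def)
  qed
qed

lemma inv1_inv1[simp]: "inv1 (inv1 x) = x" by (simp add: inv1_def)

lemma red_foldr: "red r \<Longrightarrow> red (foldr step u r)"
  by (induction u) (auto simp: red_step)

lemma foldr_fw_reduce: "red r \<Longrightarrow> foldr step (fw_reduce u) r = foldr step u r"
proof (induction u)
  case Nil then show ?case by simp
next
  case (Cons x u)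
  show ?case
  proof (cases "fw_reduce u")
    case Nil
    then show ?thesis using Cons by (simp add: fw_reduce_Cons step_def)
  next
    fix y ys assume Cons2: "fw_reduce u = y # ys"
    show ?thesis
    proof (cases "fst x = fst y \<and> snd x \<noteq> snd y")
      case True
      then have y: "y = inv1 x" by (cases x; cases y) (auto simp: inv1_def)
      have "foldr step (x # u) r = step x (foldr step (y # ys) r)"
        using Cons.IH[OF Cons.prems] Cons2 by simp
      also have "\<dots> = foldr step ys r" using step_cancel[OF red_foldr[OF Cons.prems, of ys], of x] y by simp
      moreover have "fw_reduce (x # u) = ys" using True Cons2 by (simp add: fw_reduce_Cons step_def)
      ultimately show ?thesis by simp
    next
      case False
      then have "fw_reduce (x # u) = x # fw_reduce u" using Cons2 by (simp add: fw_reduce_Cons step_def)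
      then show ?thesis using Cons.IH[OF Cons.prems] by simp
    qed
  qed
qed

lemma fw_reduce_left: "fw_reduce (fw_reduce u @ v) = fw_reduce (u @ v)"
  by (simp add: fw_reduce_append foldr_fw_reduce red_fw_reduce)

lemma fw_reduce_right: "fw_reduce (u @ fw_reduce v) = fw_reduce (u @ v)"
  by (simp add: fw_reduce_append)

lemma set_step: "set (step x r) \<subseteq> insert x (set r)"
  by (cases r) (auto simp: step_def)

lemma set_fw_reduce: "set (fw_reduce w) \<subseteq> set w"
  by (induction w) (use set_step in \<open>fastforce simp: fw_reduce_Cons\<close>)+

lemma fw_inv_Cons: "fw_inv (x # w) = fw_inv w @ [inv1 x]"
  by (cases x) (simp add: fw_inv_def inv1_def)

lemma foldr_inv_cancel: "red r \<Longrightarrow> foldr step (fw_inv w) (foldr step w r) = r"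
proof (induction w)
  case Nil then show ?case by (simp add: fw_inv_def)
next
  case (Cons x w)
  have "foldr step (fw_inv (x # w)) (foldr step (x # w) r)
      = foldr step (fw_inv w) (step (inv1 x) (step x (foldr step w r)))"
    by (simp add: fw_inv_Cons)
  also have "\<dots> = foldr step (fw_inv w) (foldr step w r)"
    using step_cancel[of "foldr step w r" "inv1 x"] red_foldr[OF Cons.prems] by simp
  finally show ?case using Cons by simp
qed

lemma fw_reduce_foldr: "fw_reduce w = foldr step w []"
  using fw_reduce_append[of w "[]"] by simp

lemma fw_reduce_inv_left: "fw_reduce (fw_inv w @ w) = []"
  using foldr_inv_cancel[of "[]" w] by (simp add: fw_reduce_append fw_reduce_foldr[of w])

lemma set_fw_inv: "fst ` set (fw_inv w) = fst ` set w"
  by (force simp: fw_inv_def image_iff)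

lemma group_free_group: "group (free_group S)"
proof (rule groupI)
  fix x y assume "x \<in> carrier (free_group S)" "y \<in> carrier (free_group S)"
  then show "x \<otimes>\<^bsub>free_group S\<^esub> y \<in> carrier (free_group S)"
  proof -
    have "fst ` set (fw_reduce (x @ y)) \<subseteq> fst ` set (x @ y)"
      using set_fw_reduce[of "x @ y"] by (rule image_mono)
    moreover have "fst ` set (x @ y) \<subseteq> S" using \<open>x \<in> carrier (free_group S)\<close> \<open>y \<in> carrier (free_group S)\<close>
      by (auto simp: free_group_def)
    ultimately have "fst ` set (fw_reduce (x @ y)) \<subseteq> S" by blast
    then show ?thesis using \<open>x \<in> carrier (free_group S)\<close> \<open>y \<in> carrier (free_group S)\<close>
      by (auto simp: free_group_def)
  qed
next
  show "\<one>\<^bsub>free_group S\<^esub> \<in> carrier (free_group S)" by (simp add: free_group_def)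
next
  fix x y z
  show "x \<otimes>\<^bsub>free_group S\<^esub> y \<otimes>\<^bsub>free_group S\<^esub> z = x \<otimes>\<^bsub>free_group S\<^esub> (y \<otimes>\<^bsub>free_group S\<^esub> z)"
    by (simp add: free_group_def fw_reduce_left fw_reduce_right)
next
  fix x assume "x \<in> carrier (free_group S)"
  then show "\<one>\<^bsub>free_group S\<^esub> \<otimes>\<^bsub>free_group S\<^esub> x = x" by (simp add: free_group_def)
next
  fix x assume x: "x \<in> carrier (free_group S)"
  show "\<exists>y\<in>carrier (free_group S). y \<otimes>\<^bsub>free_group S\<^esub> x = \<one>\<^bsub>free_group S\<^esub>"
  proof (intro bexI)
    show "fw_reduce (fw_inv x) \<otimes>\<^bsub>free_group S\<^esub> x = \<one>\<^bsub>free_group S\<^esub>"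
      by (simp add: free_group_def fw_reduce_left fw_reduce_inv_left)
    show "fw_reduce (fw_inv x) \<in> carrier (free_group S)"
      using x set_fw_reduce[of "fw_inv x"] set_fw_inv[of x] by (auto simp: free_group_def)
  qed
qed

definition lt :: "('g, 'b) monoid_scheme \<Rightarrow> ('a \<Rightarrow> 'g) \<Rightarrow> 'a \<times> bool \<Rightarrow> 'g" where
  "lt H f x = (if snd x then inv\<^bsub>H\<^esub> (f (fst x)) else f (fst x))"

definition ev :: "('g, 'b) monoid_scheme \<Rightarrow> ('a \<Rightarrow> 'g) \<Rightarrow> 'a fword \<Rightarrow> 'g" where
  "ev H f w = foldr (\<lambda>x acc. lt H f x \<otimes>\<^bsub>H\<^esub> acc) w \<one>\<^bsub>H\<^esub>"

context
  fixes H (structure) and f and S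
  assumes grp: "group H" and fS: "f ` S \<subseteq> carrier H"
begin

lemma lt_carrier: "fst x \<in> S \<Longrightarrow> lt H f x \<in> carrier H"
  using fS group.inv_closed[OF grp] by (auto simp: lt_def)

lemma ev_carrier: "fst ` set w \<subseteq> S \<Longrightarrow> ev H f w \<in> carrier H"
  by (induction w) (auto simp: ev_def lt_carrier group.is_monoid[OF grp] monoid.m_closed monoid.one_closed)

lemma ev_Nil: "ev H f [] = \<one>" by (simp add: ev_def)

lemma ev_Cons: "ev H f (x # w) = lt H f x \<otimes> ev H f w"
  by (simp add: ev_def)

lemma lt_cancel: "fst x \<in> S \<Longrightarrow> y = inv1 x \<Longrightarrow> lt H f x \<otimes> lt H f y = \<one>"
  using fS grp by (auto simp: lt_def inv1_def group.r_inv group.l_inv)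

lemma ev_step: "fst x \<in> S \<Longrightarrow> fst ` set r \<subseteq> S \<Longrightarrow> ev H f (step x r) = lt H f x \<otimes> ev H f r"
proof (cases r)
  case Nil then show ?thesis by (simp add: step_def ev_def)
next
  case (Cons y ys)
  assume xS: "fst x \<in> S" and rS: "fst ` set r \<subseteq> S"
  show ?thesis
  proof (cases "fst x = fst y \<and> snd x \<noteq> snd y")
    case True
    then have y: "y = inv1 x" by (cases x; cases y) (auto simp: inv1_def)
    have yS: "fst y \<in> S" and ysS: "fst ` set ys \<subseteq> S" using rS Cons by auto
    have "lt H f x \<otimes> ev H f r = (lt H f x \<otimes> lt H f y) \<otimes> ev H f ys"
      using Cons by (simp add: ev_Cons group.is_monoid[OF grp] monoid.m_assoc lt_carrier xS yS ev_carrier ysS)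
    also have "\<dots> = ev H f ys" using lt_cancel[OF xS y] by (simp add: group.is_monoid[OF grp] monoid.l_one ev_carrier ysS)
    finally have c: "lt H f x \<otimes> ev H f r = ev H f ys" .
    have st: "step x r = ys" using True Cons by (simp add: step_def)
    show ?thesis using c st by simp
  next
    case False
    then have st: "step x r = x # r" using Cons by (simp add: step_def)
    show ?thesis unfolding st by (simp add: ev_Cons)
  qed
qed

lemma set_foldr_step: "fst ` set (foldr step u r) \<subseteq> fst ` set u \<union> fst ` set r"
proof (induction u)
  case Nil then show ?case by simp
next
  case (Cons x u)
  have "set (step x (foldr step u r)) \<subseteq> insert x (set (foldr step u r))" by (rule set_step)
  then show ?case using Cons by force
qed

lemma ev_foldr: "fst ` set u \<subseteq> S \<Longrightarrow> fst ` set r \<subseteq> S \<Longrightarrow> ev H f (foldr step u r) = ev H f (u @ r)"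
proof (induction u)
  case Nil then show ?case by simp
next
  case (Cons x u)
  have uS: "fst ` set u \<subseteq> S" using Cons.prems by auto
  have "fst ` set (foldr step u r) \<subseteq> S" using set_foldr_step[of u r] uS Cons.prems(2) by blast
  then have "ev H f (foldr step (x # u) r) = lt H f x \<otimes> ev H f (foldr step u r)"
    using Cons.prems by (simp add: ev_step)
  then show ?case using Cons by (simp add: ev_Cons)
qed

lemma ev_fw_reduce: "fst ` set w \<subseteq> S \<Longrightarrow> ev H f (fw_reduce w) = ev H f w"
  using ev_foldr[of w "[]"] by (simp add: fw_reduce_foldr[of w])

lemma ev_append: "fst ` set u \<subseteq> S \<Longrightarrow> fst ` set v \<subseteq> S \<Longrightarrow> ev H f (u @ v) = ev H f u \<otimes> ev H f v"
proof (induction u)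
  case Nil then show ?case by (simp add: ev_Nil ev_carrier group.is_monoid[OF grp] monoid.l_one)
next
  case (Cons x u)
  then show ?case by (simp add: ev_Cons group.is_monoid[OF grp] monoid.m_assoc lt_carrier ev_carrier)
qed

lemma ev_hom: "ev H f \<in> hom (free_group S) H"
proof (rule homI)
  fix x assume "x \<in> carrier (free_group S)"
  then show "ev H f x \<in> carrier H" by (intro ev_carrier) (simp add: free_group_def)
next
  fix x y assume "x \<in> carrier (free_group S)" "y \<in> carrier (free_group S)"
  then have xS: "fst ` set x \<subseteq> S" and yS: "fst ` set y \<subseteq> S" by (auto simp: free_group_def)
  then have xyS: "fst ` set (x @ y) \<subseteq> S" by auto
  show "ev H f (x \<otimes>\<^bsub>free_group S\<^esub> y) = ev H f x \<otimes> ev H f y"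
    by (simp add: free_group_def ev_fw_reduce[OF xyS] ev_append[OF xS yS])
qed

lemma ev_group_hom: "group_hom (free_group S) H (ev H f)"
  by (simp add: group_hom_def group_hom_axioms_def group_free_group grp ev_hom)

lemma ev_fgen: "a \<in> S \<Longrightarrow> ev H f (fgen a) = f a"
  using fS by (simp add: ev_def fgen_def lt_def group.is_monoid[OF grp] monoid.r_one subset_eq)

end

lemma fgen_carrier: "a \<in> S \<Longrightarrow> fgen a \<in> carrier (free_group S)"
  by (simp add: free_group_def fgen_def fw_reduce_Cons step_def)

lemma normal_closure_kernel:
  assumes G: "group G" and hh: "group_hom G H \<phi>" and A: "A \<subseteq> carrier G"
    and one: "\<And>a. a \<in> A \<Longrightarrow> \<phi> a = \<one>\<^bsub>H\<^esub>"
    and x: "x \<in> normal_closure G A"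
  shows "\<phi> x = \<one>\<^bsub>H\<^esub>"
proof -
  have MG: "monoid G" using G by (rule group.is_monoid)
  have "(\<Union>g\<in>carrier G. (\<lambda>a. g \<otimes>\<^bsub>G\<^esub> a \<otimes>\<^bsub>G\<^esub> inv\<^bsub>G\<^esub> g) ` A) \<subseteq> kernel G H \<phi>"
  proof safe
    fix g a assume g: "g \<in> carrier G" and a: "a \<in> A"
    have aG: "a \<in> carrier G" using a A by auto
    have "\<phi> (g \<otimes>\<^bsub>G\<^esub> a \<otimes>\<^bsub>G\<^esub> inv\<^bsub>G\<^esub> g) = \<phi> g \<otimes>\<^bsub>H\<^esub> \<phi> a \<otimes>\<^bsub>H\<^esub> inv\<^bsub>H\<^esub> \<phi> g"
      using g aG hh by (simp add: group_hom.hom_mult group.inv_closed[OF G] monoid.m_closed[OF MG] group_hom.hom_inv)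
    also have "\<dots> = \<one>\<^bsub>H\<^esub>"
    proof -
      have HG: "group H" using hh by (simp add: group_hom_def)
      have pg: "\<phi> g \<in> carrier H" using g hh by (simp add: group_hom.hom_closed)
      show ?thesis using one[OF a] pg by (simp add: group.r_inv[OF HG] monoid.r_one[OF group.is_monoid[OF HG]])
    qed
    finally show "g \<otimes>\<^bsub>G\<^esub> a \<otimes>\<^bsub>G\<^esub> inv\<^bsub>G\<^esub> g \<in> kernel G H \<phi>"
      using g aG by (simp add: kernel_def group.inv_closed[OF G] monoid.m_closed[OF MG])
  qed
  then have "normal_closure G A \<subseteq> kernel G H \<phi>"
    unfolding normal_closure_def
    by (rule group.generate_subgroup_incl[OF G _ group_hom.subgroup_kernel[OF hh]])
  then show ?thesis using x by (auto simp: kernel_def)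
qed



definition supp :: "(int \<times> int \<Rightarrow> int) \<Rightarrow> (int \<times> int) set" where
  "supp \<alpha> = {x. \<alpha> x \<noteq> 0}"

definition GG :: "int \<times> int \<Rightarrow> int" where "GG x = \<bar>fst x\<bar> * \<bar>snd x\<bar>"

definition kk :: "int \<times> int \<Rightarrow> int \<times> int \<Rightarrow> int" where
  "kk h x = GG (fst x - fst h, snd x - snd h) - GG (fst x + fst h, snd x + snd h)"

lemma kk_odd: "kk h (-a, -b) = - kk h (a, b)"
proof -
  have "\<bar>- a - fst h\<bar> = \<bar>a + fst h\<bar>" "\<bar>- b - snd h\<bar> = \<bar>b + snd h\<bar>"
       "\<bar>- a + fst h\<bar> = \<bar>a - fst h\<bar>" "\<bar>- b + snd h\<bar> = \<bar>b - snd h\<bar>" by arith+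
  then show ?thesis unfolding kk_def GG_def by simp
qed

definition om :: "int \<times> int \<Rightarrow> (int \<times> int \<Rightarrow> int) \<Rightarrow> (int \<times> int \<Rightarrow> int) \<Rightarrow> int" where
  "om h \<alpha> \<beta> = (\<Sum>x\<in>supp \<alpha>. \<Sum>y\<in>supp \<beta>. \<alpha> x * \<beta> y * kk h (fst y - fst x, snd y - snd x))"

lemma om_eq:
  assumes "finite U" "supp \<alpha> \<subseteq> U" "finite V" "supp \<beta> \<subseteq> V"
  shows "om h \<alpha> \<beta> = (\<Sum>x\<in>U. \<Sum>y\<in>V. \<alpha> x * \<beta> y * kk h (fst y - fst x, snd y - snd x))"
proof -
  have fa: "finite (supp \<alpha>)" "finite (supp \<beta>)" using assms finite_subset by auto
  have "om h \<alpha> \<beta> = (\<Sum>x\<in>supp \<alpha>. \<Sum>y\<in>V. \<alpha> x * \<beta> y * kk h (fst y - fst x, snd y - snd x))"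
    unfolding om_def
    by (rule sum.cong[OF refl], rule sum.mono_neutral_left) (use assms in \<open>auto simp: supp_def\<close>)
  also have "\<dots> = (\<Sum>x\<in>U. \<Sum>y\<in>V. \<alpha> x * \<beta> y * kk h (fst y - fst x, snd y - snd x))"
    by (rule sum.mono_neutral_left) (use assms in \<open>auto simp: supp_def\<close>)
  finally show ?thesis .
qed

lemma supp_add: "supp (\<lambda>x. \<alpha> x + \<beta> x) \<subseteq> supp \<alpha> \<union> supp \<beta>"
  by (auto simp: supp_def)

lemma om_add_left:
  assumes "finite (supp \<alpha>)" "finite (supp \<alpha>')" "finite (supp \<beta>)"
  shows "om h (\<lambda>x. \<alpha> x + \<alpha>' x) \<beta> = om h \<alpha> \<beta> + om h \<alpha>' \<beta>"
proof -
  let ?U = "supp \<alpha> \<union> supp \<alpha>'"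
  have "om h (\<lambda>x. \<alpha> x + \<alpha>' x) \<beta> = (\<Sum>x\<in>?U. \<Sum>y\<in>supp \<beta>. (\<alpha> x + \<alpha>' x) * \<beta> y * kk h (fst y - fst x, snd y - snd x))"
    by (rule om_eq) (use assms supp_add in auto)
  also have "\<dots> = (\<Sum>x\<in>?U. \<Sum>y\<in>supp \<beta>. \<alpha> x * \<beta> y * kk h (fst y - fst x, snd y - snd x))
      + (\<Sum>x\<in>?U. \<Sum>y\<in>supp \<beta>. \<alpha>' x * \<beta> y * kk h (fst y - fst x, snd y - snd x))"
    by (simp add: distrib_right sum.distrib)
  also have "\<dots> = om h \<alpha> \<beta> + om h \<alpha>' \<beta>"
    using assms by (simp add: om_eq[symmetric])
  finally show ?thesis .
qed

lemma om_add_right: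
  assumes "finite (supp \<alpha>)" "finite (supp \<beta>)" "finite (supp \<beta>')"
  shows "om h \<alpha> (\<lambda>x. \<beta> x + \<beta>' x) = om h \<alpha> \<beta> + om h \<alpha> \<beta>'"
proof -
  let ?V = "supp \<beta> \<union> supp \<beta>'"
  have "om h \<alpha> (\<lambda>x. \<beta> x + \<beta>' x) = (\<Sum>x\<in>supp \<alpha>. \<Sum>y\<in>?V. \<alpha> x * (\<beta> y + \<beta>' y) * kk h (fst y - fst x, snd y - snd x))"
    by (rule om_eq) (use assms supp_add in auto)
  also have "\<dots> = (\<Sum>x\<in>supp \<alpha>. \<Sum>y\<in>?V. \<alpha> x * \<beta> y * kk h (fst y - fst x, snd y - snd x))
      + (\<Sum>x\<in>supp \<alpha>. \<Sum>y\<in>?V. \<alpha> x * \<beta>' y * kk h (fst y - fst x, snd y - snd x))"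
    by (simp add: distrib_right distrib_left sum.distrib)
  also have "\<dots> = om h \<alpha> \<beta> + om h \<alpha> \<beta>'"
    using assms by (simp add: om_eq[symmetric])
  finally show ?thesis .
qed

lemma om_neg_left:
  assumes "finite (supp \<alpha>)" "finite (supp \<beta>)"
  shows "om h (\<lambda>x. - \<alpha> x) \<beta> = - om h \<alpha> \<beta>"
proof -
  have "om h (\<lambda>x. - \<alpha> x) \<beta> = (\<Sum>x\<in>supp \<alpha>. \<Sum>y\<in>supp \<beta>. (- \<alpha> x) * \<beta> y * kk h (fst y - fst x, snd y - snd x))"
    by (rule om_eq) (use assms in \<open>auto simp: supp_def\<close>)
  then show ?thesis by (simp add: om_def sum_negf)
qed

lemma om_self: "finite (supp \<alpha>) \<Longrightarrow> om h \<alpha> \<alpha> = 0"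
proof -
  let ?S = "supp \<alpha>"
  have "om h \<alpha> \<alpha> = (\<Sum>y\<in>?S. \<Sum>x\<in>?S. \<alpha> x * \<alpha> y * kk h (fst y - fst x, snd y - snd x))"
    unfolding om_def by (rule sum.swap)
  also have "\<dots> = (\<Sum>y\<in>?S. \<Sum>x\<in>?S. - (\<alpha> y * \<alpha> x * kk h (fst x - fst y, snd x - snd y)))"
  proof (intro sum.cong refl)
    fix x y :: "int \<times> int"
    have "kk h (fst x - fst y, snd x - snd y) = - kk h (fst y - fst x, snd y - snd x)"
      using kk_odd[of h "fst y - fst x" "snd y - snd x"] by simp
    then show "\<alpha> x * \<alpha> y * kk h (fst y - fst x, snd y - snd x) = - (\<alpha> y * \<alpha> x * kk h (fst x - fst y, snd x - snd y))"
      by simp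
  qed
  also have "\<dots> = - om h \<alpha> \<alpha>" by (simp add: om_def sum_negf)
  finally show ?thesis by simp
qed

definition amap :: "int \<Rightarrow> int \<times> int \<Rightarrow> int \<times> int \<Rightarrow> int \<times> int" where
  "amap e v x = (e * (fst x - fst v), e * (snd x - snd v))"
definition gmap :: "int \<Rightarrow> int \<times> int \<Rightarrow> int \<times> int \<Rightarrow> int \<times> int" where
  "gmap e v x = (fst v + e * fst x, snd v + e * snd x)"
definition actf :: "int \<Rightarrow> int \<times> int \<Rightarrow> (int \<times> int \<Rightarrow> int) \<Rightarrow> (int \<times> int \<Rightarrow> int)" where
  "actf e v \<alpha> = (\<lambda>x. \<alpha> (amap e v x))"

definition pm1 :: "int \<Rightarrow> bool" where "pm1 e \<longleftrightarrow> e = 1 \<or> e = -1"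

lemma pm1_sq: "pm1 e \<Longrightarrow> e * e = 1" by (auto simp: pm1_def)
lemma pm1_mult: "pm1 e \<Longrightarrow> pm1 e' \<Longrightarrow> pm1 (e * e')" by (auto simp: pm1_def)

lemma amap_gmap: "pm1 e \<Longrightarrow> amap e v (gmap e v x) = x"
  by (auto simp: pm1_def amap_def gmap_def)
lemma gmap_amap: "pm1 e \<Longrightarrow> gmap e v (amap e v x) = x"
  by (auto simp: pm1_def amap_def gmap_def)
lemma inj_gmap: "pm1 e \<Longrightarrow> inj (gmap e v)"
  by (metis amap_gmap injI)

lemma supp_actf: "pm1 e \<Longrightarrow> supp (actf e v \<alpha>) = gmap e v ` supp \<alpha>"
proof
  assume e: "pm1 e"
  show "supp (actf e v \<alpha>) \<subseteq> gmap e v ` supp \<alpha>"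
  proof
    fix x assume "x \<in> supp (actf e v \<alpha>)"
    then have "amap e v x \<in> supp \<alpha>" by (simp add: supp_def actf_def)
    moreover have "x = gmap e v (amap e v x)" by (simp add: gmap_amap[OF e])
    ultimately show "x \<in> gmap e v ` supp \<alpha>" by (rule rev_image_eqI)
  qed
  show "gmap e v ` supp \<alpha> \<subseteq> supp (actf e v \<alpha>)"
  proof
    fix x assume "x \<in> gmap e v ` supp \<alpha>"
    then obtain y where "y \<in> supp \<alpha>" "x = gmap e v y" by blast
    then show "x \<in> supp (actf e v \<alpha>)" by (simp add: supp_def actf_def amap_gmap[OF e])
  qed
qed

lemma finite_supp_actf: "pm1 e \<Longrightarrow> finite (supp \<alpha>) \<Longrightarrow> finite (supp (actf e v \<alpha>))"
  by (simp add: supp_actf)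

lemma kk_scale: "pm1 e \<Longrightarrow> kk h (e * a, e * b) = e * kk h (a, b)"
  by (cases "e = 1") (simp_all add: pm1_def kk_odd)

lemma om_actf:
  assumes e: "pm1 e" and f: "finite (supp \<alpha>)" "finite (supp \<beta>)"
  shows "om h (actf e v \<alpha>) (actf e v \<beta>) = e * om h \<alpha> \<beta>"
proof -
  have "om h (actf e v \<alpha>) (actf e v \<beta>) =
     (\<Sum>x\<in>gmap e v ` supp \<alpha>. \<Sum>y\<in>gmap e v ` supp \<beta>. actf e v \<alpha> x * actf e v \<beta> y * kk h (fst y - fst x, snd y - snd x))"
    unfolding om_def using e by (simp add: supp_actf)
  also have "\<dots> = (\<Sum>x\<in>supp \<alpha>. \<Sum>y\<in>supp \<beta>. \<alpha> x * \<beta> y * kk h (fst (gmap e v y) - fst (gmap e v x), snd (gmap e v y) - snd (gmap e v x)))"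
  proof -
    have I: "\<And>A. inj_on (gmap e v) A" by (meson inj_gmap[OF e] inj_on_subset subset_UNIV)
    show ?thesis by (simp add: sum.reindex[OF I] actf_def amap_gmap[OF e])
  qed
  also have "\<dots> = (\<Sum>x\<in>supp \<alpha>. \<Sum>y\<in>supp \<beta>. e * (\<alpha> x * \<beta> y * kk h (fst y - fst x, snd y - snd x)))"
  proof (intro sum.cong refl)
    fix x y :: "int \<times> int"
    have "kk h (fst (gmap e v y) - fst (gmap e v x), snd (gmap e v y) - snd (gmap e v x))
        = kk h (e * (fst y - fst x), e * (snd y - snd x))"
      by (simp add: gmap_def algebra_simps)
    also have "\<dots> = e * kk h (fst y - fst x, snd y - snd x)" by (rule kk_scale[OF e])
    finally show "\<alpha> x * \<beta> y * kk h (fst (gmap e v y) - fst (gmap e v x), snd (gmap e v y) - snd (gmap e v x))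
       = e * (\<alpha> x * \<beta> y * kk h (fst y - fst x, snd y - snd x))" by simp
  qed
  also have "\<dots> = e * om h \<alpha> \<beta>" by (simp add: om_def sum_distrib_left)
  finally show ?thesis .
qed

lemma actf_actf: "pm1 e \<Longrightarrow> actf e v (actf e' v' \<alpha>) = actf (e * e') (gmap e v v') \<alpha>"
  by (auto simp: actf_def amap_def gmap_def pm1_def algebra_simps)

lemma actf_add: "actf e v (\<lambda>x. \<alpha> x + \<beta> x) = (\<lambda>x. actf e v \<alpha> x + actf e v \<beta> x)"
  by (simp add: actf_def)

definition Kmult :: "int \<times> int \<Rightarrow> (int \<times> int) \<times> int \<times> (int \<times> int \<Rightarrow> int) \<times> int
   \<Rightarrow> (int \<times> int) \<times> int \<times> (int \<times> int \<Rightarrow> int) \<times> int \<Rightarrow> (int \<times> int) \<times> int \<times> (int \<times> int \<Rightarrow> int) \<times> int" where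
  "Kmult h z w = (case z of (v, e, \<alpha>, s) \<Rightarrow> case w of (v', e', \<alpha>', s') \<Rightarrow>
     (gmap e v v', e * e', (\<lambda>x. \<alpha> x + actf e v \<alpha>' x), s + e * s' + om h \<alpha> (actf e v \<alpha>')))"

definition Kgrp :: "int \<times> int \<Rightarrow> ((int \<times> int) \<times> int \<times> (int \<times> int \<Rightarrow> int) \<times> int) monoid" where
  "Kgrp h = \<lparr> carrier = {(v, e, \<alpha>, s). pm1 e \<and> finite (supp \<alpha>)},
              monoid.mult = Kmult h, one = ((0, 0), 1, (\<lambda>_. 0), 0) \<rparr>"

lemma Kmult_simp[simp]: "Kmult h (v, e, \<alpha>, s) (v', e', \<alpha>', s') =
     (gmap e v v', e * e', (\<lambda>x. \<alpha> x + actf e v \<alpha>' x), s + e * s' + om h \<alpha> (actf e v \<alpha>'))"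
  by (simp add: Kmult_def)

lemma Kcarrier[simp]: "(v, e, \<alpha>, s) \<in> carrier (Kgrp h) \<longleftrightarrow> pm1 e \<and> finite (supp \<alpha>)"
  by (simp add: Kgrp_def)

lemma Kmult'[simp]: "(v, e, \<alpha>, s) \<otimes>\<^bsub>Kgrp h\<^esub> (v', e', \<alpha>', s') =
     (gmap e v v', e * e', (\<lambda>x. \<alpha> x + actf e v \<alpha>' x), s + e * s' + om h \<alpha> (actf e v \<alpha>'))"
  by (simp add: Kgrp_def)

lemma Kone[simp]: "\<one>\<^bsub>Kgrp h\<^esub> = ((0, 0), 1, (\<lambda>_. 0), 0)"
  by (simp add: Kgrp_def)

lemma supp_zero[simp]: "supp (\<lambda>_. 0) = {}" by (simp add: supp_def)
lemma om_zero_right[simp]: "om h \<alpha> (\<lambda>_. 0) = 0" by (simp add: om_def)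
lemma om_zero_left[simp]: "om h (\<lambda>_. 0) \<beta> = 0" by (simp add: om_def)
lemma actf_zero[simp]: "actf e v (\<lambda>_. 0) = (\<lambda>_. 0)" by (simp add: actf_def)
lemma actf_one: "actf 1 (0,0) \<alpha> = \<alpha>" by (simp add: actf_def amap_def)

lemma inv_aux: "(((0::int), (0::int)), (1::int), (\<lambda>x. - b x + b x), - e * s - (t::int) + e * s + t) = ((0,0), 1, (\<lambda>_. (0::int)), (0::int))"
  by simp

lemma Kinv_left:
  assumes e: "pm1 e"
  shows "(gmap e (0,0) (- fst v, - snd v), e, (\<lambda>x. - actf e (gmap e (0,0) (- fst v, - snd v)) a x),
     - e * s - om h (\<lambda>x. - actf e (gmap e (0,0) (- fst v, - snd v)) a x) (actf e (gmap e (0,0) (- fst v, - snd v)) a))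
     \<otimes>\<^bsub>Kgrp h\<^esub> (v, e, a, s) = \<one>\<^bsub>Kgrp h\<^esub>"
proof -
  have 1: "gmap e (gmap e (0,0) (- fst v, - snd v)) v = (0, 0)" using e by (auto simp: gmap_def pm1_def)
  have 2: "e * e = 1" using e by (rule pm1_sq)
  show ?thesis unfolding Kmult' Kone 1 2
    by (rule inv_aux[of "actf e (gmap e (0,0) (- fst v, - snd v)) a" e s])
qed

lemma Kinv_carrier:
  assumes e: "pm1 e" and f: "finite (supp a)"
  shows "(gmap e (0,0) (- fst v, - snd v), e, (\<lambda>x. - actf e (gmap e (0,0) (- fst v, - snd v)) a x),
     - e * s - om h (\<lambda>x. - actf e (gmap e (0,0) (- fst v, - snd v)) a x) (actf e (gmap e (0,0) (- fst v, - snd v)) a))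
     \<in> carrier (Kgrp h)"
proof -
  let ?b = "actf e (gmap e (0,0) (- fst v, - snd v)) a"
  have "finite (supp ?b)" by (rule finite_supp_actf[OF e f])
  moreover have "supp (\<lambda>x. - ?b x) = supp ?b" by (simp add: supp_def)
  ultimately show ?thesis using e by simp
qed

lemma group_Kgrp: "group (Kgrp h)"
proof (rule groupI)
  fix x y assume "x \<in> carrier (Kgrp h)" "y \<in> carrier (Kgrp h)"
  then show "x \<otimes>\<^bsub>Kgrp h\<^esub> y \<in> carrier (Kgrp h)"
    by (cases x; cases y) (auto simp: pm1_mult intro: finite_subset[OF supp_add] finite_supp_actf)
next
  show "\<one>\<^bsub>Kgrp h\<^esub> \<in> carrier (Kgrp h)" by (simp add: pm1_def)
next
  fix x assume "x \<in> carrier (Kgrp h)"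
  then show "\<one>\<^bsub>Kgrp h\<^esub> \<otimes>\<^bsub>Kgrp h\<^esub> x = x"
    by (cases x) (simp add: gmap_def actf_one)
next
  fix x y z assume x: "x \<in> carrier (Kgrp h)" and y: "y \<in> carrier (Kgrp h)" and z: "z \<in> carrier (Kgrp h)"
  obtain v1 e1 a1 s1 where X: "x = (v1, e1, a1, s1)" by (cases x)
  obtain v2 e2 a2 s2 where Y: "y = (v2, e2, a2, s2)" by (cases y)
  obtain v3 e3 a3 s3 where Z: "z = (v3, e3, a3, s3)" by (cases z)
  have e1: "pm1 e1" and e2: "pm1 e2" and f1: "finite (supp a1)" and f2: "finite (supp a2)" and f3: "finite (supp a3)"
    using x y z X Y Z by auto
  have f2': "finite (supp (actf e1 v1 a2))" "finite (supp (actf e2 v2 a3))"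
    "finite (supp (actf e1 v1 (actf e2 v2 a3)))"
    using e1 e2 f2 f3 by (auto intro: finite_supp_actf)
  have g: "gmap e1 v1 (gmap e2 v2 v3) = gmap (e1 * e2) (gmap e1 v1 v2) v3"
    by (simp add: gmap_def algebra_simps)
  have A: "actf (e1 * e2) (gmap e1 v1 v2) a3 = actf e1 v1 (actf e2 v2 a3)"
    using actf_actf[OF e1] by simp
  have s: "om h (\<lambda>x. a1 x + actf e1 v1 a2 x) (actf e1 v1 (actf e2 v2 a3))
     = om h a1 (actf e1 v1 (actf e2 v2 a3)) + e1 * om h a2 (actf e2 v2 a3)"
    using om_add_left[OF f1 f2'(1) f2'(3)] om_actf[OF e1 f2 f2'(2)] by simp
  have s': "om h a1 (actf e1 v1 (\<lambda>x. a2 x + actf e2 v2 a3 x))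
     = om h a1 (actf e1 v1 a2) + om h a1 (actf e1 v1 (actf e2 v2 a3))"
    unfolding actf_add by (rule om_add_right[OF f1 f2'(1) f2'(3)])
  show "x \<otimes>\<^bsub>Kgrp h\<^esub> y \<otimes>\<^bsub>Kgrp h\<^esub> z = x \<otimes>\<^bsub>Kgrp h\<^esub> (y \<otimes>\<^bsub>Kgrp h\<^esub> z)"
    unfolding X Y Z Kmult'
    apply (simp only: A s s' g)
    apply (simp add: actf_def distrib_left mult.assoc add_ac)
    done
next
  fix x assume x: "x \<in> carrier (Kgrp h)"
  obtain v e a s where X: "x = (v, e, a, s)" by (cases x)
  have e: "pm1 e" and f: "finite (supp a)" using x X by auto
  show "\<exists>y\<in>carrier (Kgrp h). y \<otimes>\<^bsub>Kgrp h\<^esub> x = \<one>\<^bsub>Kgrp h\<^esub>"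
    unfolding X using Kinv_left[OF e, where v=v and a=a and s=s and h=h] Kinv_carrier[OF e f, where v=v and s=s and h=h] by (rule bexI)
qed


lemma Kinv:
  assumes e: "pm1 e" and f: "finite (supp a)"
  shows "inv\<^bsub>Kgrp h\<^esub> (v, e, a, s) = (gmap e (0,0) (- fst v, - snd v), e, (\<lambda>x. - actf e (gmap e (0,0) (- fst v, - snd v)) a x),
     - e * s - om h (\<lambda>x. - actf e (gmap e (0,0) (- fst v, - snd v)) a x) (actf e (gmap e (0,0) (- fst v, - snd v)) a))"
  by (rule group.inv_equality[OF group_Kgrp Kinv_left[OF e]]) (use e f Kinv_carrier[OF e f] in simp_all)

lemma Kmult1: "(v, 1, a, s) \<otimes>\<^bsub>Kgrp h\<^esub> (v', 1, a', s') =
   ((fst v + fst v', snd v + snd v'), 1, (\<lambda>x. a x + a' (fst x - fst v, snd x - snd v)),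
    s + s' + om h a (\<lambda>x. a' (fst x - fst v, snd x - snd v)))"
  by (simp add: gmap_def actf_def amap_def)

lemma pm1_1[simp]: "pm1 1" by (simp add: pm1_def)

lemma Kinv1:
  assumes f: "finite (supp a)"
  shows "\<exists>s'. inv\<^bsub>Kgrp h\<^esub> (v, 1, a, s) = ((- fst v, - snd v), 1, (\<lambda>x. - a (fst x + fst v, snd x + snd v)), s')"
  using Kinv[OF pm1_1 f, of h v s] by (simp add: gmap_def actf_def amap_def)

lemma Kinv0:
  assumes f: "finite (supp a)"
  shows "inv\<^bsub>Kgrp h\<^esub> ((0,0), 1, a, s) = ((0, 0), 1, (\<lambda>x. - a x), - s)"
proof -
  have "inv\<^bsub>Kgrp h\<^esub> ((0,0), 1, a, s) = ((0, 0), 1, (\<lambda>x. - a x), - s - om h (\<lambda>x. - a x) a)"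
    using Kinv[OF pm1_1 f, of h "(0,0)" s] by (simp add: gmap_def actf_one)
  also have "om h (\<lambda>x. - a x) a = 0" using om_neg_left[OF f f] om_self[OF f] by simp
  finally show ?thesis by simp
qed

lemma om_neg_right:
  assumes "finite (supp \<alpha>)" "finite (supp \<beta>)"
  shows "om h \<alpha> (\<lambda>x. - \<beta> x) = - om h \<alpha> \<beta>"
proof -
  have "om h \<alpha> (\<lambda>x. - \<beta> x) = (\<Sum>x\<in>supp \<alpha>. \<Sum>y\<in>supp \<beta>. \<alpha> x * (- \<beta> y) * kk h (fst y - fst x, snd y - snd x))"
    by (rule om_eq) (use assms in \<open>auto simp: supp_def\<close>)
  then show ?thesis by (simp add: om_def sum_negf)
qed

lemma supp_neg[simp]: "supp (\<lambda>x. - \<alpha> x) = supp \<alpha>" by (simp add: supp_def)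

lemma Kcomm0:
  assumes fa: "finite (supp \<alpha>)" and fb: "finite (supp \<beta>)"
  shows "commutator (Kgrp h) ((0,0), 1, \<alpha>, s) ((0,0), 1, \<beta>, t) = ((0,0), 1, (\<lambda>_. 0), om h \<alpha> \<beta> - om h \<beta> \<alpha>)"
proof -
  have fab: "finite (supp (\<lambda>x. \<alpha> x + \<beta> x))" using fa fb supp_add finite_subset by blast
  have 1: "((0,0), 1, \<alpha>, s) \<otimes>\<^bsub>Kgrp h\<^esub> ((0,0), 1, \<beta>, t) = ((0,0), 1, (\<lambda>x. \<alpha> x + \<beta> x), s + t + om h \<alpha> \<beta>)"
    by (simp only: Kmult1) simp
  have 2: "((0,0), 1, (\<lambda>x. \<alpha> x + \<beta> x), s + t + om h \<alpha> \<beta>) \<otimes>\<^bsub>Kgrp h\<^esub> ((0,0), 1, (\<lambda>x. - \<alpha> x), - s)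
     = ((0,0), 1, \<beta>, t + om h \<alpha> \<beta> - om h \<beta> \<alpha>)"
  proof -
    have fna: "finite (supp (\<lambda>x. - \<alpha> x))" using fa by simp
    have "om h (\<lambda>x. \<alpha> x + \<beta> x) (\<lambda>x. - \<alpha> x) = - om h \<beta> \<alpha>"
      using om_add_left[where h=h and \<beta>="\<lambda>x. - \<alpha> x", OF fa fb fna] om_neg_right[OF fa fa] om_neg_right[OF fb fa] om_self[OF fa] fa
      by simp
    then show ?thesis by (simp only: Kmult1) simp
  qed
  have 3: "((0,0), 1, \<beta>, t + om h \<alpha> \<beta> - om h \<beta> \<alpha>) \<otimes>\<^bsub>Kgrp h\<^esub> ((0,0), 1, (\<lambda>x. - \<beta> x), - t)
     = ((0,0), 1, (\<lambda>_. 0), om h \<alpha> \<beta> - om h \<beta> \<alpha>)"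
  proof -
    have "om h \<beta> (\<lambda>x. - \<beta> x) = 0" using om_neg_right[OF fb fb] om_self[OF fb] by simp
    then show ?thesis by (simp only: Kmult1) simp
  qed
  show ?thesis unfolding commutator_def 1 Kinv0[OF fa] Kinv0[OF fb] 2 3 ..
qed


lemma finite_supp_shift: "finite (supp \<beta>) \<Longrightarrow> finite (supp (\<lambda>x. \<beta> (fst x - a, snd x - b)))"
proof -
  assume f: "finite (supp \<beta>)"
  have "(\<lambda>x. \<beta> (fst x - a, snd x - b)) = actf 1 (a, b) \<beta>" by (simp add: actf_def amap_def)
  then show ?thesis using finite_supp_actf[OF pm1_1 f] by simp
qed

lemma finite_supp_shift': "finite (supp \<beta>) \<Longrightarrow> finite (supp (\<lambda>x. \<beta> (fst x + a, snd x + b)))"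
  using finite_supp_shift[of \<beta> "-a" "-b"] by simp

lemma Kproj_mult: "x \<otimes>\<^bsub>Kgrp h\<^esub> y = (gmap (fst (snd x)) (fst x) (fst y), fst (snd x) * fst (snd y),
   (\<lambda>z. fst (snd (snd x)) z + actf (fst (snd x)) (fst x) (fst (snd (snd y))) z),
   snd (snd (snd x)) + fst (snd x) * snd (snd (snd y)) + om h (fst (snd (snd x))) (actf (fst (snd x)) (fst x) (fst (snd (snd y)))))"
  by (cases x; cases y) simp

lemma Kproj_inv: "x \<in> carrier (Kgrp h) \<Longrightarrow> inv\<^bsub>Kgrp h\<^esub> x =
   (gmap (fst (snd x)) (0,0) (- fst (fst x), - snd (fst x)), fst (snd x),
    (\<lambda>z. - actf (fst (snd x)) (gmap (fst (snd x)) (0,0) (- fst (fst x), - snd (fst x))) (fst (snd (snd x))) z),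
    - fst (snd x) * snd (snd (snd x)) - om h (\<lambda>z. - actf (fst (snd x)) (gmap (fst (snd x)) (0,0) (- fst (fst x), - snd (fst x))) (fst (snd (snd x))) z)
        (actf (fst (snd x)) (gmap (fst (snd x)) (0,0) (- fst (fst x), - snd (fst x))) (fst (snd (snd x)))))"
  by (cases x) (simp add: Kinv)

lemma Kconj:
  assumes g: "g \<in> carrier (Kgrp h)" and g1: "fst (snd g) = 1"
  shows "fst (inv\<^bsub>Kgrp h\<^esub> g \<otimes>\<^bsub>Kgrp h\<^esub> ((0,0), 1, \<gamma>, sc) \<otimes>\<^bsub>Kgrp h\<^esub> g) = (0,0)"
    "fst (snd (inv\<^bsub>Kgrp h\<^esub> g \<otimes>\<^bsub>Kgrp h\<^esub> ((0,0), 1, \<gamma>, sc) \<otimes>\<^bsub>Kgrp h\<^esub> g)) = 1"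
    "fst (snd (snd (inv\<^bsub>Kgrp h\<^esub> g \<otimes>\<^bsub>Kgrp h\<^esub> ((0,0), 1, \<gamma>, sc) \<otimes>\<^bsub>Kgrp h\<^esub> g)))
       = (\<lambda>x. \<gamma> (fst x + fst (fst g), snd x + snd (fst g)))"
  using g1 by (simp_all add: Kproj_mult Kproj_inv[OF g] gmap_def actf_def amap_def)

lemma Kpow_nat:
  assumes z: "z \<in> carrier (Kgrp h)" and z1: "fst (snd z) = 1"
  shows "fst (z [^]\<^bsub>Kgrp h\<^esub> (k::nat)) = (int k * fst (fst z), int k * snd (fst z)) \<and> fst (snd (z [^]\<^bsub>Kgrp h\<^esub> k)) = 1"
proof (induction k)
  case 0 then show ?case by simp
next
  case (Suc k)
  then show ?case using z1 by (simp add: Kproj_mult gmap_def algebra_simps)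
qed

lemma Kinv_fst: "x \<in> carrier (Kgrp h) \<Longrightarrow> fst (inv\<^bsub>Kgrp h\<^esub> x) = gmap (fst (snd x)) (0,0) (- fst (fst x), - snd (fst x))"
  by (subst Kproj_inv, assumption, rule fst_conv)

lemma Kinv_ep: "x \<in> carrier (Kgrp h) \<Longrightarrow> fst (snd (inv\<^bsub>Kgrp h\<^esub> x)) = fst (snd x)"
  by (subst Kproj_inv, assumption) (simp only: fst_conv snd_conv)

lemma Kpow_neg: assumes "n < 0" shows "z [^]\<^bsub>Kgrp h\<^esub> (n::int) = inv\<^bsub>Kgrp h\<^esub> (z [^]\<^bsub>Kgrp h\<^esub> (nat (-n)))"
  unfolding int_pow_def2[of "Kgrp h" z n] if_P[OF assms] by (rule refl)

lemma Kpow_nonneg: assumes "\<not> n < 0" shows "z [^]\<^bsub>Kgrp h\<^esub> (n::int) = z [^]\<^bsub>Kgrp h\<^esub> (nat n)"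
  unfolding int_pow_def2[of "Kgrp h" z n] if_not_P[OF assms] by (rule refl)

lemma Kpow_int:
  assumes z: "z \<in> carrier (Kgrp h)" and z1: "fst (snd z) = 1"
  shows "fst (z [^]\<^bsub>Kgrp h\<^esub> (n::int)) = (n * fst (fst z), n * snd (fst z)) \<and> fst (snd (z [^]\<^bsub>Kgrp h\<^esub> n)) = 1"
proof (cases "n < 0")
  case True
  let ?p = "z [^]\<^bsub>Kgrp h\<^esub> (nat (-n))"
  have c: "?p \<in> carrier (Kgrp h)"
    by (rule monoid.nat_pow_closed[OF group.is_monoid[OF group_Kgrp] z])
  have e: "z [^]\<^bsub>Kgrp h\<^esub> n = inv\<^bsub>Kgrp h\<^esub> ?p"
    by (rule Kpow_neg[OF True])
  have PP: "fst ?p = (int (nat (-n)) * fst (fst z), int (nat (-n)) * snd (fst z)) \<and> fst (snd ?p) = 1"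
    by (rule Kpow_nat[OF z z1])
  note P = conjunct1[OF PP] conjunct2[OF PP]
  have nn: "int (nat (-n)) = -n" using True by simp
  have A: "fst (z [^]\<^bsub>Kgrp h\<^esub> n) = gmap 1 (0,0) (- (-n * fst (fst z)), - (-n * snd (fst z)))"
    unfolding e Kinv_fst[OF c] P nn fst_conv snd_conv by (rule refl)
  have B: "fst (snd (z [^]\<^bsub>Kgrp h\<^esub> n)) = 1"
    unfolding e Kinv_ep[OF c] P by (rule refl)
  have C: "gmap 1 (0,0) (- (-n * fst (fst z)), - (-n * snd (fst z))) = (n * fst (fst z), n * snd (fst z))"
    by (simp add: gmap_def)
  show ?thesis by (rule conjI[OF trans[OF A C] B])
next
  case False
  have e: "z [^]\<^bsub>Kgrp h\<^esub> n = z [^]\<^bsub>Kgrp h\<^esub> (nat n)"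
    by (rule Kpow_nonneg[OF False])
  have PP: "fst (z [^]\<^bsub>Kgrp h\<^esub> (nat n)) = (int (nat n) * fst (fst z), int (nat n) * snd (fst z)) \<and> fst (snd (z [^]\<^bsub>Kgrp h\<^esub> (nat n))) = 1"
    by (rule Kpow_nat[OF z z1])
  have nn: "int (nat n) = n" using False by simp
  show ?thesis unfolding e using PP unfolding nn .
qed

lemma tuple_eta: "x = (fst x, fst (snd x), fst (snd (snd x)), snd (snd (snd x)))" by simp

lemma om_swap:
  assumes "finite (supp \<alpha>)" "finite (supp \<beta>)"
  shows "om h \<beta> \<alpha> = - om h \<alpha> \<beta>"
proof -
  have "om h \<beta> \<alpha> = (\<Sum>x\<in>supp \<alpha>. \<Sum>y\<in>supp \<beta>. \<beta> y * \<alpha> x * kk h (fst x - fst y, snd x - snd y))"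
    unfolding om_def by (rule sum.swap)
  also have "\<dots> = (\<Sum>x\<in>supp \<alpha>. \<Sum>y\<in>supp \<beta>. - (\<alpha> x * \<beta> y * kk h (fst y - fst x, snd y - snd x)))"
  proof (intro sum.cong refl)
    fix x y :: "int \<times> int"
    have "kk h (fst x - fst y, snd x - snd y) = - kk h (fst y - fst x, snd y - snd x)"
      using kk_odd[of h "fst y - fst x" "snd y - snd x"] by simp
    then show "\<beta> y * \<alpha> x * kk h (fst x - fst y, snd x - snd y) = - (\<alpha> x * \<beta> y * kk h (fst y - fst x, snd y - snd x))"
      by simp
  qed
  also have "\<dots> = - om h \<alpha> \<beta>" by (simp add: om_def sum_negf)
  finally show ?thesis .
qed


definition al2 :: "int \<times> int \<Rightarrow> int" where
  "al2 x = (if x = (0,0) then 1 else if x = (1,0) then -1 else 0)"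
definition gam :: "int \<times> int \<Rightarrow> int" where
  "gam x = al2 x - al2 (fst x, snd x - 1)"
definition P4 :: "(int \<times> int) set" where "P4 = {(0,0),(1,0),(0,1),(1,1)}"
definition phi :: "int \<Rightarrow> int" where "phi u = 2 * \<bar>u\<bar> - \<bar>u + 1\<bar> - \<bar>u - 1\<bar>"

lemma phi_eq: "phi u = (if u = 0 then -2 else 0)" unfolding phi_def by arith

lemma supp_al2: "supp al2 \<subseteq> {(0,0),(1,0)}" by (auto simp: supp_def al2_def split: if_splits)
lemma finite_al2: "finite (supp al2)" using supp_al2 finite_subset by blast
lemma supp_gam: "supp gam \<subseteq> P4"
proof
  fix x assume "x \<in> supp gam"
  then have "al2 x \<noteq> 0 \<or> al2 (fst x, snd x - 1) \<noteq> 0" by (auto simp: supp_def gam_def)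
  then show "x \<in> P4" by (cases x) (auto simp: al2_def P4_def split: if_splits)
qed
lemma finite_P4: "finite P4" by (simp add: P4_def)
lemma finite_gam: "finite (supp gam)" using supp_gam finite_P4 finite_subset by blast

lemma Hkk: "(\<Sum>x\<in>P4. \<Sum>z\<in>P4. gam x * gam z * kk h (fst z - a - fst x, snd z - b - snd x))
   = phi (- a - fst h) * phi (- b - snd h) - phi (fst h - a) * phi (snd h - b)"
  unfolding P4_def phi_def kk_def by (simp add: gam_def al2_def GG_def algebra_simps)


lemma om_gam:
  "om h gam (\<lambda>x. gam (fst x + a, snd x + b)) =
     phi (- a - fst h) * phi (- b - snd h) - phi (fst h - a) * phi (snd h - b)"
proof -
  let ?t = "\<lambda>z::int\<times>int. (fst z - a, snd z - b)"
  let ?g = "\<lambda>x. gam (fst x + a, snd x + b)"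
  have inj: "inj_on ?t P4" by (auto simp: inj_on_def)
  have sV: "supp ?g \<subseteq> ?t ` P4"
  proof
    fix y assume "y \<in> supp ?g"
    then have "(fst y + a, snd y + b) \<in> supp gam" by (simp add: supp_def)
    then have "(fst y + a, snd y + b) \<in> P4" using supp_gam by blast
    moreover have "y = ?t (fst y + a, snd y + b)" by simp
    ultimately show "y \<in> ?t ` P4" by (rule rev_image_eqI)
  qed
  have "om h gam ?g = (\<Sum>x\<in>P4. \<Sum>y\<in>?t ` P4. gam x * ?g y * kk h (fst y - fst x, snd y - snd x))"
    by (rule om_eq[OF finite_P4 supp_gam _ sV]) (simp add: finite_P4)
  also have "\<dots> = (\<Sum>x\<in>P4. \<Sum>z\<in>P4. gam x * gam z * kk h (fst z - a - fst x, snd z - b - snd x))"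
    by (simp add: sum.reindex[OF inj])
  also have "\<dots> = phi (- a - fst h) * phi (- b - snd h) - phi (fst h - a) * phi (snd h - b)"
    by (rule Hkk)
  finally show ?thesis .
qed

definition A0 :: "(int \<times> int) \<times> int \<times> (int \<times> int \<Rightarrow> int) \<times> int" where "A0 = ((1,0), 1, al2, 0)"
definition B0 :: "(int \<times> int) \<times> int \<times> (int \<times> int \<Rightarrow> int) \<times> int" where "B0 = ((0,1), 1, (\<lambda>_. 0), 0)"
definition X1 :: "(int \<times> int) \<times> int \<times> (int \<times> int \<Rightarrow> int) \<times> int" where "X1 = ((0,0), -1, (\<lambda>_. 0), 0)"
definition X2 :: "(int \<times> int) \<times> int \<times> (int \<times> int \<Rightarrow> int) \<times> int" where "X2 = ((1,0), -1, al2, 0)"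
definition X3 :: "(int \<times> int) \<times> int \<times> (int \<times> int \<Rightarrow> int) \<times> int" where "X3 = ((0,-1), -1, (\<lambda>_. 0), 0)"

lemma A0_carrier: "A0 \<in> carrier (Kgrp h)" by (simp add: A0_def finite_al2)
lemma B0_carrier: "B0 \<in> carrier (Kgrp h)" by (simp add: B0_def)
lemma X1_carrier: "X1 \<in> carrier (Kgrp h)" by (simp add: X1_def pm1_def)
lemma X2_carrier: "X2 \<in> carrier (Kgrp h)" by (simp add: X2_def pm1_def finite_al2)
lemma X3_carrier: "X3 \<in> carrier (Kgrp h)" by (simp add: X3_def pm1_def)

lemma X21: "X2 \<otimes>\<^bsub>Kgrp h\<^esub> X1 = A0"
  by (simp add: X2_def X1_def A0_def gmap_def)
lemma X13: "X1 \<otimes>\<^bsub>Kgrp h\<^esub> X3 = B0"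
  by (simp add: X1_def X3_def B0_def gmap_def)
lemma X11: "X1 \<otimes>\<^bsub>Kgrp h\<^esub> X1 = \<one>\<^bsub>Kgrp h\<^esub>"
  by (simp add: X1_def gmap_def)
lemma X33: "X3 \<otimes>\<^bsub>Kgrp h\<^esub> X3 = \<one>\<^bsub>Kgrp h\<^esub>"
  by (simp add: X3_def gmap_def)
lemma X22: "X2 \<otimes>\<^bsub>Kgrp h\<^esub> X2 = \<one>\<^bsub>Kgrp h\<^esub>"
proof -
  have a: "actf (-1) (1,0) al2 = (\<lambda>x. - al2 x)"
    by (rule ext) (auto simp: actf_def amap_def al2_def)
  have "om h al2 (\<lambda>x. - al2 x) = 0" using om_neg_right[OF finite_al2 finite_al2] om_self[OF finite_al2] by simp
  then show ?thesis by (simp add: X2_def gmap_def a)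
qed


lemma finite_zero: "finite (supp (\<lambda>_::int\<times>int. 0::int))" by simp

lemma c_proj:
  "fst (commutator (Kgrp h) A0 B0) = (0,0) \<and> fst (snd (commutator (Kgrp h) A0 B0)) = 1
   \<and> fst (snd (snd (commutator (Kgrp h) A0 B0))) = gam"
  unfolding commutator_def A0_def B0_def Kinv[OF pm1_1 finite_al2] Kinv[OF pm1_1 finite_zero]
  by (simp add: gmap_def actf_def amap_def fun_eq_iff gam_def)

lemma c_carrier: "commutator (Kgrp h) A0 B0 \<in> carrier (Kgrp h)"
  unfolding commutator_def
  using A0_carrier B0_carrier group_Kgrp
  by (simp add: group.inv_closed monoid.m_closed group.is_monoid)

lemma g_proj:
  "A0 [^]\<^bsub>Kgrp h\<^esub> (n::int) \<otimes>\<^bsub>Kgrp h\<^esub> B0 [^]\<^bsub>Kgrp h\<^esub> (m::int) \<in> carrier (Kgrp h)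
   \<and> fst (A0 [^]\<^bsub>Kgrp h\<^esub> n \<otimes>\<^bsub>Kgrp h\<^esub> B0 [^]\<^bsub>Kgrp h\<^esub> m) = (n, m)
   \<and> fst (snd (A0 [^]\<^bsub>Kgrp h\<^esub> n \<otimes>\<^bsub>Kgrp h\<^esub> B0 [^]\<^bsub>Kgrp h\<^esub> m)) = 1"
proof -
  have a: "fst (A0 [^]\<^bsub>Kgrp h\<^esub> n) = (n * 1, n * 0) \<and> fst (snd (A0 [^]\<^bsub>Kgrp h\<^esub> n)) = 1"
    using Kpow_int[OF A0_carrier, where n=n and h=h] by (simp add: A0_def)
  have b: "fst (B0 [^]\<^bsub>Kgrp h\<^esub> m) = (m * 0, m * 1) \<and> fst (snd (B0 [^]\<^bsub>Kgrp h\<^esub> m)) = 1"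
    using Kpow_int[OF B0_carrier, where n=m and h=h] by (simp add: B0_def)
  have c: "A0 [^]\<^bsub>Kgrp h\<^esub> n \<otimes>\<^bsub>Kgrp h\<^esub> B0 [^]\<^bsub>Kgrp h\<^esub> m \<in> carrier (Kgrp h)"
    using A0_carrier B0_carrier group_Kgrp
    by (simp add: group.int_pow_closed monoid.m_closed group.is_monoid)
  show ?thesis using a b c by (simp add: Kproj_mult gmap_def)
qed


lemma rel_val:
  "commutator (Kgrp h) (commutator (Kgrp h) A0 B0)
     (inv\<^bsub>Kgrp h\<^esub> (A0 [^]\<^bsub>Kgrp h\<^esub> (n::int) \<otimes>\<^bsub>Kgrp h\<^esub> B0 [^]\<^bsub>Kgrp h\<^esub> (m::int))
      \<otimes>\<^bsub>Kgrp h\<^esub> commutator (Kgrp h) A0 B0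
      \<otimes>\<^bsub>Kgrp h\<^esub> (A0 [^]\<^bsub>Kgrp h\<^esub> n \<otimes>\<^bsub>Kgrp h\<^esub> B0 [^]\<^bsub>Kgrp h\<^esub> m))
   = ((0,0), 1, (\<lambda>_. 0), 2 * om h gam (\<lambda>x. gam (fst x + n, snd x + m)))"
proof -
  define c where "c = commutator (Kgrp h) A0 B0"
  define g where "g = A0 [^]\<^bsub>Kgrp h\<^esub> n \<otimes>\<^bsub>Kgrp h\<^esub> B0 [^]\<^bsub>Kgrp h\<^esub> m"
  define sc where "sc = snd (snd (snd c))"
  have cp: "fst c = (0,0)" "fst (snd c) = 1" "fst (snd (snd c)) = gam"
    using c_proj[of h] unfolding c_def by auto
  have cE: "c = ((0,0), 1, gam, sc)"
  proof -
    have "c = (fst c, fst (snd c), fst (snd (snd c)), snd (snd (snd c)))" by (rule tuple_eta)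
    then show ?thesis unfolding cp sc_def[symmetric] .
  qed
  have gp: "g \<in> carrier (Kgrp h)" "fst g = (n, m)" "fst (snd g) = 1"
    using g_proj[where n=n and h=h and m=m] unfolding g_def by auto
  define c' where "c' = inv\<^bsub>Kgrp h\<^esub> g \<otimes>\<^bsub>Kgrp h\<^esub> c \<otimes>\<^bsub>Kgrp h\<^esub> g"
  define sc' where "sc' = snd (snd (snd c'))"
  let ?g' = "\<lambda>x. gam (fst x + n, snd x + m)"
  have c'p: "fst c' = (0,0)" "fst (snd c') = 1" "fst (snd (snd c')) = ?g'"
    unfolding c'_def cE using Kconj[OF gp(1) gp(3), of gam sc] gp(2) by auto
  have c'E: "c' = ((0,0), 1, ?g', sc')"
  proof -
    have "c' = (fst c', fst (snd c'), fst (snd (snd c')), snd (snd (snd c')))" by (rule tuple_eta)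
    then show ?thesis unfolding c'p sc'_def[symmetric] .
  qed
  have fg': "finite (supp ?g')" by (rule finite_supp_shift'[OF finite_gam])
  have "commutator (Kgrp h) c c' = ((0,0), 1, (\<lambda>_. 0), om h gam ?g' - om h ?g' gam)"
    unfolding cE c'E by (rule Kcomm0[OF finite_gam fg'])
  also have "om h ?g' gam = - om h gam ?g'" by (rule om_swap[OF finite_gam fg'])
  finally have "commutator (Kgrp h) c c' = ((0,0), 1, (\<lambda>_. 0), 2 * om h gam ?g')" by simp
  then show ?thesis unfolding c'_def c_def g_def .
qed



lemma om_gam_val:
  assumes p: "(n, m) \<in> pos_pairs" and hp: "h \<in> pos_pairs"
  shows "om h gam (\<lambda>x. gam (fst x + n, snd x + m)) = (if (n, m) = h then -4 else 0)"
proof -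
  obtain h1 h2 where H: "h = (h1, h2)" by (cases h)
  have A: "phi (- n - h1) * phi (- m - h2) = 0"
    using p hp unfolding H pos_pairs_def phi_eq by auto
  have B: "phi (h1 - n) * phi (h2 - m) = (if (n, m) = (h1, h2) then 4 else 0)"
    unfolding phi_eq by auto
  show ?thesis unfolding om_gam H fst_conv snd_conv A B by simp
qed

definition Rw :: "('g, 'b) monoid_scheme \<Rightarrow> 'g \<Rightarrow> 'g \<Rightarrow> int \<Rightarrow> int \<Rightarrow> 'g" where
  "Rw G y z n m = (let c = commutator G y z; g = y [^]\<^bsub>G\<^esub> n \<otimes>\<^bsub>G\<^esub> z [^]\<^bsub>G\<^esub> m
                   in commutator G c (inv\<^bsub>G\<^esub> g \<otimes>\<^bsub>G\<^esub> c \<otimes>\<^bsub>G\<^esub> g))"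

lemma rel1_Rw: "rel1 p = Rw (free_group {2::nat, 3}) (fgen 2) (fgen 3) (fst p) (snd p)"
  unfolding rel1_def Rw_def Let_def by (rule refl)

lemma rel2_Inr: "rel2 (Inr p) = Rw (free_group {1::nat, 2, 3}) (fgen 2 \<otimes>\<^bsub>free_group {1::nat, 2, 3}\<^esub> fgen 1)
    (fgen 1 \<otimes>\<^bsub>free_group {1::nat, 2, 3}\<^esub> fgen 3) (fst p) (snd p)"
  unfolding rel2_def Rw_def Let_def by (simp add: case_prod_beta)

lemma rel2_Inl: "rel2 (Inl k) = fgen k \<otimes>\<^bsub>free_group {1::nat, 2, 3}\<^esub> fgen k"
  unfolding rel2_def Let_def by simp

lemma Rw_carrier: "group G \<Longrightarrow> y \<in> carrier G \<Longrightarrow> z \<in> carrier G \<Longrightarrow> Rw G y z n m \<in> carrier G"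
  unfolding Rw_def Let_def commutator_def
  by (simp add: group.inv_closed group.int_pow_closed monoid.m_closed group.is_monoid)

lemma Rw_hom:
  assumes hh: "group_hom G H \<phi>" and y: "y \<in> carrier G" and z: "z \<in> carrier G"
  shows "\<phi> (Rw G y z n m) = Rw H (\<phi> y) (\<phi> z) n m"
proof -
  interpret group_hom G H \<phi> by (rule hh)
  show ?thesis using y z
    unfolding Rw_def Let_def commutator_def
    by (simp add: hom_int_pow)
qed

lemma Rw_int: "Rw integer_group a b n m = 0"
  unfolding Rw_def Let_def commutator_def by simp

lemma Rw_K: "Rw (Kgrp h) A0 B0 n m = ((0,0), 1, (\<lambda>_. 0), 2 * om h gam (\<lambda>x. gam (fst x + n, snd x + m)))"
  unfolding Rw_def Let_def by (rule rel_val)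

lemma Rw_K_one:
  assumes "(n, m) \<in> pos_pairs" "h \<in> pos_pairs"
  shows "Rw (Kgrp h) A0 B0 n m = \<one>\<^bsub>Kgrp h\<^esub> \<longleftrightarrow> (n, m) \<noteq> h"
  unfolding Rw_K om_gam_val[OF assms] by simp

lemma not_in_nc:
  assumes G: "group G" and hh: "group_hom G H \<phi>" and RI: "R ` I \<subseteq> carrier G"
    and ne: "\<phi> (R i) \<noteq> \<one>\<^bsub>H\<^esub>" and others: "\<And>j. j \<in> I \<Longrightarrow> j \<noteq> i \<Longrightarrow> \<phi> (R j) = \<one>\<^bsub>H\<^esub>"
  shows "R i \<notin> normal_closure G (R ` (I - {i}))"
proof
  assume "R i \<in> normal_closure G (R ` (I - {i}))"
  moreover have "R ` (I - {i}) \<subseteq> carrier G" using RI by auto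
  ultimately have "\<phi> (R i) = \<one>\<^bsub>H\<^esub>"
    by (rule normal_closure_kernel[OF G hh, rotated -1]) (use others in auto)
  with ne show False by simp
qed


theorem theorem5p4:
  shows "minimal_relators (free_group {2::nat, 3}) pos_pairs rel1
       \<and> minimal_relators (free_group {1::nat, 2, 3}) rel2_index rel2"
proof
  show "minimal_relators (free_group {2::nat, 3}) pos_pairs rel1"
    unfolding minimal_relators_def
  proof
    fix h assume hp: "h \<in> pos_pairs"
    let ?f = "\<lambda>j::nat. if j = 2 then A0 else B0"
    let ?\<phi> = "ev (Kgrp h) ?f"
    have fS: "?f ` {2,3} \<subseteq> carrier (Kgrp h)" using A0_carrier B0_carrier by auto
    have hh: "group_hom (free_group {2::nat,3}) (Kgrp h) ?\<phi>" by (rule ev_group_hom[OF group_Kgrp fS])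
    have g2: "?\<phi> (fgen 2) = A0" using ev_fgen[OF group_Kgrp fS, of 2] by simp
    have g3: "?\<phi> (fgen 3) = B0" using ev_fgen[OF group_Kgrp fS, of 3] by simp
    have c2: "fgen 2 \<in> carrier (free_group {2::nat,3})" by (rule fgen_carrier) simp
    have c3: "fgen 3 \<in> carrier (free_group {2::nat,3})" by (rule fgen_carrier) simp
    have val: "\<And>p. ?\<phi> (rel1 p) = Rw (Kgrp h) A0 B0 (fst p) (snd p)"
      unfolding rel1_Rw Rw_hom[OF hh c2 c3] g2 g3 ..
    show "rel1 h \<notin> normal_closure (free_group {2::nat, 3}) (rel1 ` (pos_pairs - {h}))"
    proof (rule not_in_nc[OF group_free_group hh])
      show "rel1 ` pos_pairs \<subseteq> carrier (free_group {2::nat, 3})"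
        using Rw_carrier[OF group_free_group c2 c3] by (auto simp: rel1_Rw)
      have "(fst h, snd h) \<in> pos_pairs" using hp by simp
      then show "?\<phi> (rel1 h) \<noteq> \<one>\<^bsub>Kgrp h\<^esub>" unfolding val using Rw_K_one[of "fst h" "snd h" h] hp by simp
      fix j assume j: "j \<in> pos_pairs" "j \<noteq> h"
      then have "(fst j, snd j) \<in> pos_pairs" by simp
      then show "?\<phi> (rel1 j) = \<one>\<^bsub>Kgrp h\<^esub>" unfolding val using Rw_K_one[of "fst j" "snd j" h] hp j by simp
    qed
  qed
next
  let ?S = "{1::nat, 2, 3}"
  let ?F = "free_group ?S"
  have c1: "fgen 1 \<in> carrier ?F" by (rule fgen_carrier) simp
  have c2: "fgen 2 \<in> carrier ?F" by (rule fgen_carrier) simp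
  have c3: "fgen 3 \<in> carrier ?F" by (rule fgen_carrier) simp
  have MF: "monoid ?F" by (rule group.is_monoid[OF group_free_group])
  have c21: "fgen 2 \<otimes>\<^bsub>?F\<^esub> fgen 1 \<in> carrier ?F" by (rule monoid.m_closed[OF MF c2 c1])
  have c13: "fgen 1 \<otimes>\<^bsub>?F\<^esub> fgen 3 \<in> carrier ?F" by (rule monoid.m_closed[OF MF c1 c3])
  have RI: "rel2 ` rel2_index \<subseteq> carrier ?F"
  proof
    fix r assume "r \<in> rel2 ` rel2_index"
    then obtain i where i: "i \<in> rel2_index" and r: "r = rel2 i" by blast
    show "r \<in> carrier ?F"
    proof (cases i)
      case (Inl k)
      then have "k \<in> ?S" using i by (auto simp: rel2_index_def)
      then have ck: "fgen k \<in> carrier ?F" by (rule fgen_carrier)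
      show ?thesis unfolding r Inl rel2_Inl by (rule monoid.m_closed[OF MF ck ck])
    next
      case (Inr p)
      show ?thesis unfolding r Inr rel2_Inr by (rule Rw_carrier[OF group_free_group c21 c13])
    qed
  qed
  show "minimal_relators ?F rel2_index rel2"
    unfolding minimal_relators_def
  proof
    fix i assume i: "i \<in> rel2_index"
    show "rel2 i \<notin> normal_closure ?F (rel2 ` (rel2_index - {i}))"
    proof (cases i)
      case (Inl k)
      with i have k: "k \<in> ?S" by (auto simp: rel2_index_def)
      let ?f = "\<lambda>j::nat. if j = k then (1::int) else 0"
      let ?\<phi> = "ev integer_group ?f"
      have fS: "?f ` ?S \<subseteq> carrier integer_group" by simp
      have hh: "group_hom ?F integer_group ?\<phi>" by (rule ev_group_hom[OF group_integer_group fS])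
      have vl: "\<And>j. j \<in> ?S \<Longrightarrow> ?\<phi> (rel2 (Inl j)) = ?f j + ?f j"
      proof -
        fix j assume j: "j \<in> ?S"
        have cj: "fgen j \<in> carrier ?F" using j by (rule fgen_carrier)
        show "?\<phi> (rel2 (Inl j)) = ?f j + ?f j"
          unfolding rel2_Inl group_hom.hom_mult[OF hh cj cj] ev_fgen[OF group_integer_group fS j]
          by simp
      qed
      have vr: "\<And>p. ?\<phi> (rel2 (Inr p)) = 0"
        unfolding rel2_Inr Rw_hom[OF hh c21 c13] Rw_int ..
      show ?thesis unfolding Inl
      proof (rule not_in_nc[OF group_free_group hh RI])
        show "?\<phi> (rel2 (Inl k)) \<noteq> \<one>\<^bsub>integer_group\<^esub>" using vl[OF k] by simp
        fix j assume j: "j \<in> rel2_index" "j \<noteq> Inl k"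
        show "?\<phi> (rel2 j) = \<one>\<^bsub>integer_group\<^esub>"
        proof (cases j)
          case (Inl k')
          with j have "k' \<in> ?S" "k' \<noteq> k" by (auto simp: rel2_index_def)
          then show ?thesis unfolding Inl using vl by simp
        next
          case (Inr p) then show ?thesis using vr by simp
        qed
      qed
    next
      case (Inr h)
      with i have hp: "h \<in> pos_pairs" by (auto simp: rel2_index_def)
      let ?f = "\<lambda>j::nat. if j = 1 then X1 else if j = 2 then X2 else X3"
      let ?\<phi> = "ev (Kgrp h) ?f"
      have fS: "?f ` ?S \<subseteq> carrier (Kgrp h)" using X1_carrier X2_carrier X3_carrier by auto
      have hh: "group_hom ?F (Kgrp h) ?\<phi>" by (rule ev_group_hom[OF group_Kgrp fS])
      have g1: "?\<phi> (fgen 1) = X1" using ev_fgen[OF group_Kgrp fS, of 1] by simp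
      have g2: "?\<phi> (fgen 2) = X2" using ev_fgen[OF group_Kgrp fS, of 2] by simp
      have g3: "?\<phi> (fgen 3) = X3" using ev_fgen[OF group_Kgrp fS, of 3] by simp
      have a: "?\<phi> (fgen 2 \<otimes>\<^bsub>?F\<^esub> fgen 1) = A0"
        unfolding group_hom.hom_mult[OF hh c2 c1] g1 g2 by (rule X21)
      have b: "?\<phi> (fgen 1 \<otimes>\<^bsub>?F\<^esub> fgen 3) = B0"
        unfolding group_hom.hom_mult[OF hh c1 c3] g1 g3 by (rule X13)
      have vr: "\<And>p. ?\<phi> (rel2 (Inr p)) = Rw (Kgrp h) A0 B0 (fst p) (snd p)"
        unfolding rel2_Inr Rw_hom[OF hh c21 c13] a b ..
      have vl: "\<And>j. j \<in> ?S \<Longrightarrow> ?\<phi> (rel2 (Inl j)) = \<one>\<^bsub>Kgrp h\<^esub>"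
      proof -
        fix j assume j: "j \<in> ?S"
        have cj: "fgen j \<in> carrier ?F" using j by (rule fgen_carrier)
        have "?\<phi> (rel2 (Inl j)) = ?f j \<otimes>\<^bsub>Kgrp h\<^esub> ?f j"
          unfolding rel2_Inl group_hom.hom_mult[OF hh cj cj] ev_fgen[OF group_Kgrp fS j] ..
        also have "\<dots> = \<one>\<^bsub>Kgrp h\<^esub>" using j X11 X22 X33 by auto
        finally show "?\<phi> (rel2 (Inl j)) = \<one>\<^bsub>Kgrp h\<^esub>" .
      qed
      show ?thesis unfolding Inr
      proof (rule not_in_nc[OF group_free_group hh RI])
        have "(fst h, snd h) \<in> pos_pairs" using hp by simp
        then show "?\<phi> (rel2 (Inr h)) \<noteq> \<one>\<^bsub>Kgrp h\<^esub>" unfolding vr using Rw_K_one[of "fst h" "snd h" h] hp by simp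
        fix j assume j: "j \<in> rel2_index" "j \<noteq> Inr h"
        show "?\<phi> (rel2 j) = \<one>\<^bsub>Kgrp h\<^esub>"
        proof (cases j)
          case (Inl k')
          with j have "k' \<in> ?S" by (auto simp: rel2_index_def)
          then show ?thesis unfolding Inl by (rule vl)
        next
          case (Inr p)
          with j have p: "p \<in> pos_pairs" "p \<noteq> h" by (auto simp: rel2_index_def)
          then have "(fst p, snd p) \<in> pos_pairs" by simp
          then show ?thesis unfolding Inr vr using Rw_K_one[of "fst p" "snd p" h] hp p by simp
        qed
      qed
    qed
  qed
qed

end
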